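(* Let $n$ training samples carry labels in $\{1,\dots,K\}$ with indicator matrix $F\in\mathbb{R}^{K\times n}$, $n_k$ samples in class $k$; let the basis $G_1,\dots,G_r$ ($r\le n$) be a subset of the training samples with $r_k\ge1$ basis vectors in class $k$, and let $F_{G_i}$ be the class indicator of $G_i$. Let $\tilde W\in\mathbb{R}^{r\times n}$ be entrywise nonnegative with every column summing to one, of full row rank, satisfying $\tilde W_{ij}=0$ whenever $F_{G_i}\neq F_j$, and let $\tilde W'=\tilde W+\Delta W$ for a matrix $\Delta W\in\mathbb{R}^{r\times n}$. Put $\xi=\|\tilde W^\dagger\|_2\|\Delta W\|_2$, $\delta=\|\Delta W\|_F/\|\tilde W\|_F$, $n_\rho=\sqrt{\max_kn_k/\min_kn_k}$, $r_\rho=\sqrt{\max_kr_k/\min_kr_k}$. Let $X=F\tilde W^\dagger$, $X'=F\tilde W'^\dagger$, let $\gamma=\|X\|_F^2\|\tilde W\|_F^2/\|X\tilde W\|_F^2$ be the spectral risk of the ideal case, and let $\epsilon'=\|F-X'\tilde W'\|_F^2/\|X'\tilde W'\|_F^2+1$ and $\gamma'=\|X'\|_F^2\|\tilde W'\|_F^2/\|X'\tilde W'\|_F^2$ be the fitting error and spectral risk of the perturbed case. If $\xi<1/n_\rho$, then $$\epsilon'\le\frac{n_\rho^2\xi^2}{(1-n_\rho\xi)^2}+1,\qquad \gamma'\le\gamma(1+\delta)^2\Big(\frac{1+r_\rho\xi}{1-n_\rho\xi}\Big)^2.$$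
   Context: The columns of $F$ are standard basis vectors of $\mathbb{R}^K$: $F_j=e_k$ iff sample $j$ is in class $k$. $\|\cdot\|_2$ of a matrix is the spectral norm; $M^\dagger$ is the Moore–Penrose pseudo-inverse (for $\tilde W$ of full row rank, $\tilde W^\dagger=\tilde W^T(\tilde W\tilde W^T)^{-1}$). $X$ and $X'$ are the least-squares solutions of $\min_X\|F-X\tilde W\|_F^2$ and $\min_X\|F-X\tilde W'\|_F^2$. *)

theory Defs
  imports "HOL-Analysis.Analysis"
begin

definition pinv :: "real^'n^'m \<Rightarrow> real^'m^'n" where
  "pinv A = (THE X. A ** X ** A = A \<and> X ** A ** X = X \<and>
                    transpose (A ** X) = A ** X \<and> transpose (X ** A) = X ** A)"

definition spec_norm :: "real^'n^'m \<Rightarrow> real" where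
  "spec_norm A = onorm (\<lambda>x. A *v x)"

definition frob :: "real^'n^'m \<Rightarrow> real" where
  "frob A = sqrt (\<Sum>i\<in>UNIV. \<Sum>j\<in>UNIV. (A $ i $ j)\<^sup>2)"

definition indicator_mat :: "('n \<Rightarrow> 'k) \<Rightarrow> real^'n^'k" where
  "indicator_mat lab = (\<chi> k j. if lab j = k then 1 else 0)"

end

theory Submission
  imports Defs
begin


lemma mm_diff_left: "(A::real^'n^'m) ** (B - C) = A ** B - A ** C"
  by (vector matrix_matrix_mult_def sum_subtractf right_diff_distrib)
lemma mm_diff_right: "((A::real^'n^'m) - B) ** C = A ** C - B ** C"
  by (vector matrix_matrix_mult_def sum_subtractf left_diff_distrib)
lemma mm_add_right: "((A::real^'n^'m) + B) ** C = A ** C + B ** C"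
  by (vector matrix_matrix_mult_def sum.distrib distrib_right)
lemma transpose_diff: "transpose ((A::real^'n^'m) - B) = transpose A - transpose B"
  by (simp add: transpose_def vec_eq_iff)

lemma penrose_unique:
  fixes A :: "real^'n^'m" and X Y :: "real^'m^'n"
  assumes X1: "A ** X ** A = A" and X2: "X ** A ** X = X"
    and X3: "transpose (A ** X) = A ** X" and X4: "transpose (X ** A) = X ** A"
    and Y1: "A ** Y ** A = A" and Y2: "Y ** A ** Y = Y"
    and Y3: "transpose (A ** Y) = A ** Y" and Y4: "transpose (Y ** A) = Y ** A"
  shows "X = Y"
proof -
  have tA1: "transpose A = transpose A ** (A ** Y)"
    by (metis Y1 Y3 matrix_transpose_mul)
  have tA2: "transpose A = (X ** A) ** transpose A"
    by (metis X1 X4 matrix_transpose_mul matrix_mul_assoc)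
  have "X = X ** (A ** X)" using X2 by (simp add: matrix_mul_assoc)
  also have "\<dots> = X ** transpose (A ** X)" using X3 by simp
  also have "\<dots> = X ** transpose X ** transpose A" by (simp add: matrix_transpose_mul matrix_mul_assoc)
  also have "\<dots> = X ** transpose X ** (transpose A ** (A ** Y))" using tA1 by simp
  also have "\<dots> = X ** transpose (A ** X) ** A ** Y" by (simp add: matrix_transpose_mul matrix_mul_assoc)
  also have "\<dots> = X ** A ** X ** A ** Y" using X3 by (simp add: matrix_mul_assoc)
  also have "\<dots> = X ** A ** Y" using X2 by simp
  finally have 1: "X = X ** A ** Y" .
  have "Y = (Y ** A) ** Y" using Y2 by simp
  also have "\<dots> = transpose (Y ** A) ** Y" using Y4 by simp
  also have "\<dots> = transpose A ** transpose Y ** Y" by (simp add: matrix_transpose_mul)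
  also have "\<dots> = X ** A ** transpose A ** transpose Y ** Y" using tA2 by (metis matrix_mul_assoc)
  also have "\<dots> = X ** A ** transpose (Y ** A) ** Y" by (simp add: matrix_transpose_mul matrix_mul_assoc)
  also have "\<dots> = X ** A ** (Y ** A ** Y)" using Y4 by (simp add: matrix_mul_assoc)
  also have "\<dots> = X ** A ** Y" using Y2 by simp
  finally show ?thesis using 1 by simp
qed

lemma surj_gram_inj:
  fixes A :: "real^'n^'m"
  assumes "surj ((*v) A)"
  shows "inj ((*v) (A ** transpose A))"
proof -
  have "x = 0" if "(A ** transpose A) *v x = 0" for x
  proof -
    have "x \<bullet> ((A ** transpose A) *v x) = 0" using that by simp
    then have "(transpose A *v x) \<bullet> (transpose A *v x) = 0"
      by (metis dot_lmul_matrix matrix_vector_mul_assoc transpose_matrix_vector)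
    then have z: "transpose A *v x = 0" by simp
    obtain u where u: "x = A *v u" using assms by (metis surjD)
    have "x \<bullet> x = u \<bullet> (transpose A *v x)"
      by (metis u dot_lmul_matrix inner_commute transpose_matrix_vector)
    then show "x = 0" using z by simp
  qed
  then show ?thesis
    by (metis (no_types, lifting) injI matrix_vector_mult_diff_distrib right_minus_eq)
qed

lemma pinv_props:
  fixes A :: "real^'n^'m"
  assumes "surj ((*v) A)"
  shows "A ** pinv A = mat 1" "pinv A ** A ** pinv A = pinv A"
    "transpose (pinv A ** A) = pinv A ** A" "A ** pinv A ** A = A"
proof -
  let ?G = "A ** transpose A"
  obtain B where B: "B ** ?G = mat 1"
    using surj_gram_inj[OF assms] matrix_left_invertible_injective by blast
  then have B2: "?G ** B = mat 1" using matrix_left_right_inverse by blast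
  have Gt: "transpose ?G = ?G" by (simp add: matrix_transpose_mul)
  have "transpose B = B"
  proof -
    have "transpose B ** ?G = mat 1" using B2 by (metis Gt matrix_transpose_mul transpose_mat)
    then have "transpose B = transpose B ** (?G ** B)" using B2 by simp
    also have "\<dots> = B" by (metis matrix_mul_assoc matrix_mul_lid \<open>transpose B ** ?G = mat 1\<close>)
    finally show ?thesis .
  qed
  define Z where "Z = transpose A ** B"
  have AZ: "A ** Z = mat 1" unfolding Z_def using B2 by (simp add: matrix_mul_assoc)
  have P1: "A ** Z ** A = A" using AZ by simp
  have P2: "Z ** A ** Z = Z" using AZ by (metis matrix_mul_assoc matrix_mul_rid)
  have P3: "transpose (A ** Z) = A ** Z" using AZ by simp
  have P4: "transpose (Z ** A) = Z ** A" unfolding Z_def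
    using \<open>transpose B = B\<close> by (simp add: matrix_transpose_mul matrix_mul_assoc)
  have "pinv A = Z" unfolding pinv_def
  proof (rule the_equality)
    show "A ** Z ** A = A \<and> Z ** A ** Z = Z \<and> transpose (A ** Z) = A ** Z \<and> transpose (Z ** A) = Z ** A"
      using P1 P2 P3 P4 by blast
  next
    fix Y assume "A ** Y ** A = A \<and> Y ** A ** Y = Y \<and> transpose (A ** Y) = A ** Y \<and> transpose (Y ** A) = Y ** A"
    then show "Y = Z" using penrose_unique[of A Y Z] P1 P2 P3 P4 by blast
  qed
  then show "A ** pinv A = mat 1" "pinv A ** A ** pinv A = pinv A"
    "transpose (pinv A ** A) = pinv A ** A" "A ** pinv A ** A = A"
    using AZ P2 P4 by auto
qed


lemma frob_eq_norm: "frob (A::real^'n^'m) = norm A"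
  unfolding frob_def norm_vec_def L2_set_def
  by (simp add: real_norm_def) (rule sum.cong, auto simp: sum_nonneg)

lemma norm_sq_rows: "(norm (A::real^'n^'m))\<^sup>2 = (\<Sum>i\<in>UNIV. (norm (A $ i))\<^sup>2)"
  by (simp add: power2_norm_eq_inner inner_vec_def)

lemma mm_row: "(A ** B) $ i = (A $ i) v* B"
  by (simp add: vec_eq_iff matrix_matrix_mult_def vector_matrix_mult_def)

lemma spec_mv: "norm (B *v x) \<le> spec_norm B * norm x"
  unfolding spec_norm_def by (rule onorm[OF matrix_vector_mul_bounded_linear])

lemma spec_nonneg: "0 \<le> spec_norm (B::real^'n^'m)"
  unfolding spec_norm_def by (rule onorm_pos_le[OF matrix_vector_mul_bounded_linear])

lemma spec_vm: "norm (x v* (B::real^'n^'m)) \<le> spec_norm B * norm x"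
proof -
  let ?z = "x v* B"
  have "(norm ?z)\<^sup>2 = x \<bullet> (B *v ?z)" by (simp add: power2_norm_eq_inner dot_lmul_matrix)
  also have "\<dots> \<le> norm x * norm (B *v ?z)" by (rule Cauchy_Schwarz_ineq2[THEN order_trans[OF abs_ge_self]])
  also have "\<dots> \<le> norm x * (spec_norm B * norm ?z)" by (simp add: mult_left_mono spec_mv)
  finally have "norm ?z * norm ?z \<le> (spec_norm B * norm x) * norm ?z" by (simp add: power2_eq_square algebra_simps)
  then show ?thesis
    by (cases "norm ?z = 0") (auto simp: spec_nonneg intro: mult_right_le_imp_le)
qed

lemma frob_mul: "norm ((A::real^'n^'m) ** B) \<le> norm A * spec_norm B"
proof -
  have "(norm (A ** B))\<^sup>2 = (\<Sum>i\<in>UNIV. (norm (A $ i v* B))\<^sup>2)" by (simp add: norm_sq_rows mm_row)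
  also have "\<dots> \<le> (\<Sum>i\<in>UNIV. (spec_norm B * norm (A $ i))\<^sup>2)"
    by (rule sum_mono) (simp add: power_mono spec_vm)
  also have "\<dots> = (norm A * spec_norm B)\<^sup>2"
    by (simp add: norm_sq_rows power_mult_distrib sum_distrib_left algebra_simps)
  finally show ?thesis
    by (rule power2_le_imp_le) (auto simp: spec_nonneg)
qed

lemma mm_inner: "((A::real^'n^'m) ** B) \<bullet> C = A \<bullet> (C ** transpose B)"
proof -
  have "((A::real^'n^'m) ** B) \<bullet> C = (\<Sum>i\<in>UNIV. (A ** B) $ i \<bullet> C $ i)"
    by (rule inner_vec_def)
  also have "\<dots> = (\<Sum>i\<in>UNIV. A $ i \<bullet> (C ** transpose B) $ i)"
    by (rule sum.cong) (simp_all add: mm_row dot_lmul_matrix)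
  also have "\<dots> = A \<bullet> (C ** transpose B)" by (rule inner_vec_def[symmetric])
  finally show ?thesis .
qed


lemma proj_pyth:
  fixes F :: "real^'n^'m" and P :: "real^'n^'n"
  assumes Pt: "transpose P = P" and PP: "P ** P = P"
  shows "(norm F)\<^sup>2 = (norm (F ** P))\<^sup>2 + (norm (F ** (mat 1 - P)))\<^sup>2"
proof -
  have eq: "F = F ** P + F ** (mat 1 - P)" by (simp add: mm_diff_left)
  have "(F ** P) \<bullet> (F ** (mat 1 - P)) = F \<bullet> (F ** (mat 1 - P) ** P)"
    by (simp add: mm_inner Pt matrix_mul_assoc)
  also have "\<dots> = 0" by (simp add: mm_diff_right PP flip: matrix_mul_assoc)
  finally have "orthogonal (F ** P) (F ** (mat 1 - P))" by (simp add: orthogonal_def)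
  then show ?thesis using norm_add_Pythagorean eq by metis
qed

lemma proj_vec_le:
  fixes P :: "real^'n^'n"
  assumes Pt: "transpose P = P" and PP: "P ** P = P"
  shows "norm (P *v u) \<le> norm u"
proof -
  have eq: "u = P *v u + (mat 1 - P) *v u" by (simp add: matrix_vector_mult_diff_rdistrib)
  have "(P *v u) \<bullet> ((mat 1 - P) *v u) = u \<bullet> ((P ** (mat 1 - P)) *v u)"
    by (metis Pt dot_lmul_matrix matrix_vector_mul_assoc transpose_matrix_vector)
  also have "\<dots> = 0" by (simp add: mm_diff_left PP)
  finally have "orthogonal (P *v u) ((mat 1 - P) *v u)" by (simp add: orthogonal_def)
  then have "(norm u)\<^sup>2 = (norm (P *v u))\<^sup>2 + (norm ((mat 1 - P) *v u))\<^sup>2"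
    using norm_add_Pythagorean eq by metis
  then have "(norm (P *v u))\<^sup>2 \<le> (norm u)\<^sup>2" by simp
  then show ?thesis by (rule power2_le_imp_le) simp
qed

lemma perturb:
  fixes W E :: "real^'n^'r"
  assumes sW: "surj ((*v) W)" and small: "spec_norm (pinv W) * spec_norm E < 1"
  shows "surj ((*v) (W + E))"
    and "spec_norm (pinv (W + E)) \<le> spec_norm (pinv W) / (1 - spec_norm (pinv W) * spec_norm E)"
proof -
  define \<sigma> where "\<sigma> = spec_norm (pinv W)"
  define e where "e = spec_norm E"
  define \<xi> where "\<xi> = \<sigma> * e"
  have \<sigma>0: "0 \<le> \<sigma>" and e0: "0 \<le> e" by (simp_all add: \<sigma>_def e_def spec_nonneg)
  have \<xi>1: "\<xi> < 1" using small by (simp add: \<xi>_def \<sigma>_def e_def)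
  define N where "N = (W + E) ** pinv W"
  have N: "N *v y = y + E *v (pinv W *v y)" for y
    by (simp add: N_def mm_add_right pinv_props(1)[OF sW] matrix_vector_mult_add_rdistrib
        flip: matrix_vector_mul_assoc)
  have Nlow: "(1 - \<xi>) * norm y \<le> norm (N *v y)" for y
  proof -
    have "norm (E *v (pinv W *v y)) \<le> e * (\<sigma> * norm y)"
      using spec_mv[of E "pinv W *v y"] spec_mv[of "pinv W" y] e0
      by (simp add: e_def \<sigma>_def) (meson mult_left_mono order_trans)
    moreover have "norm y - norm (E *v (pinv W *v y)) \<le> norm (N *v y)"
      using N norm_triangle_ineq4[of "y + E *v (pinv W *v y)" "E *v (pinv W *v y)"] by simp
    ultimately show ?thesis by (simp add: \<xi>_def algebra_simps)
  qed
  have "inj ((*v) N)"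
  proof (rule injI)
    fix x y assume "N *v x = N *v y"
    then have "N *v (x - y) = 0" by (simp add: matrix_vector_mult_diff_distrib)
    then have "(1 - \<xi>) * norm (x - y) \<le> 0" using Nlow[of "x - y"] by simp
    then show "x = y" using \<xi>1 by (simp add: mult_le_0_iff)
  qed
  then have sN: "surj ((*v) N)" using full_rank_injective full_rank_surjective by metis
  have key: "\<exists>u. (W + E) *v u = v \<and> norm u \<le> \<sigma> / (1 - \<xi>) * norm v" for v
  proof -
    obtain y where y: "N *v y = v" using sN by (metis surjD)
    have "(1 - \<xi>) * norm y \<le> norm v" using Nlow[of y] y by simp
    then have ny: "norm y \<le> norm v / (1 - \<xi>)" using \<xi>1 by (simp add: field_simps)
    have "norm (pinv W *v y) \<le> \<sigma> * norm y" by (simp add: \<sigma>_def spec_mv)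
    also have "\<dots> \<le> \<sigma> * (norm v / (1 - \<xi>))" using ny \<sigma>0 by (rule mult_left_mono)
    finally have "norm (pinv W *v y) \<le> \<sigma> / (1 - \<xi>) * norm v" by simp
    moreover have "(W + E) *v (pinv W *v y) = v" using y by (simp add: N_def matrix_vector_mul_assoc)
    ultimately show ?thesis by blast
  qed
  show sWE: "surj ((*v) (W + E))" by (metis key surjI)
  have "norm (pinv (W + E) *v v) \<le> \<sigma> / (1 - \<xi>) * norm v" for v
  proof -
    obtain u where u: "(W + E) *v u = v" "norm u \<le> \<sigma> / (1 - \<xi>) * norm v" using key by blast
    define P where "P = pinv (W + E) ** (W + E)"
    have Pt: "transpose P = P" using pinv_props(3)[OF sWE] by (simp add: P_def)
    have PP: "P ** P = P" using pinv_props(2)[OF sWE] by (simp add: P_def matrix_mul_assoc)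
    have "pinv (W + E) *v v = P *v u" using u(1) by (simp add: P_def flip: matrix_vector_mul_assoc)
    then show ?thesis using proj_vec_le[OF Pt PP, of u] u by simp
  qed
  then show "spec_norm (pinv (W + E)) \<le> spec_norm (pinv W) / (1 - spec_norm (pinv W) * spec_norm E)"
    unfolding spec_norm_def[of "pinv (W + E)"] by (simp add: onorm_le \<xi>_def \<sigma>_def e_def)
qed



lemma eps_scalar:
  fixes b f x nr :: real
  assumes "0 \<le> b" "b \<le> f * x" "0 < f" "0 \<le> x" "1 \<le> nr" "nr * x < 1"
  shows "b\<^sup>2 / (f\<^sup>2 - b\<^sup>2) \<le> nr\<^sup>2 * x\<^sup>2 / (1 - nr * x)\<^sup>2"
proof -
  define y where "y = nr * x"
  have y0: "0 \<le> y" using assms by (simp add: y_def)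
  have y1: "y < 1" using assms by (simp add: y_def)
  have xy: "x \<le> y" using assms mult_right_mono[of 1 nr x] by (simp add: y_def)
  have "y\<^sup>2 \<le> y" using y0 y1 by (simp add: power2_eq_square mult_left_le_one_le)
  then have c: "(1-y)\<^sup>2 + y\<^sup>2 \<le> 1" by (simp add: power2_eq_square algebra_simps)
  have "f * x \<le> f * y" using mult_left_mono[OF xy, of f] assms(3) by simp
  then have "b \<le> f * y" using assms(2) by linarith
  then have b2: "b\<^sup>2 \<le> (f * y)\<^sup>2" using assms(1) by (rule power_mono)
  have "b\<^sup>2 * ((1-y)\<^sup>2 + y\<^sup>2) \<le> b\<^sup>2" using c mult_left_mono[OF c, of "b\<^sup>2"] by simp
  then have main: "b\<^sup>2 * (1-y)\<^sup>2 \<le> y\<^sup>2 * (f\<^sup>2 - b\<^sup>2)" using b2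
    by (simp add: power_mult_distrib algebra_simps)
  have "b < f" using \<open>b \<le> f * y\<close> y1 assms(3) by (smt (verit) mult_less_cancel_left2)
  then have fb: "0 < f\<^sup>2 - b\<^sup>2" using assms(1) by (simp add: power_strict_mono)
  have d: "0 < (1 - y)\<^sup>2" using y1 by simp
  have "b\<^sup>2 / (f\<^sup>2 - b\<^sup>2) \<le> y\<^sup>2 / (1 - y)\<^sup>2"
    using main fb d by (simp add: divide_le_eq le_divide_eq algebra_simps)
  then show ?thesis by (simp add: y_def power_mult_distrib)
qed

lemma ratio_mono:
  fixes x nr rr :: real
  assumes "0 \<le> x" "1 \<le> nr" "1 \<le> rr" "nr * x < 1"
  shows "(1 + x) / (1 - x) \<le> (1 + rr * x) / (1 - nr * x)"
proof (rule frac_le)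
  have "x \<le> nr * x" using assms mult_right_mono[of 1 nr x] by simp
  then show "1 - nr * x \<le> 1 - x" by simp
  have "x \<le> rr * x" using assms mult_right_mono[of 1 rr x] by simp
  then show "1 + x \<le> 1 + rr * x" by simp
  show "0 < 1 - nr * x" using assms by simp
  show "0 \<le> 1 + rr * x" using assms by simp
qed


lemma core_h:
  fixes t p \<xi> :: real
  assumes "0 \<le> \<xi>" "\<xi> < 1" "0 \<le> p" "p \<le> t * \<xi>" "0 \<le> t"
  shows "0 \<le> (1+\<xi>)\<^sup>2 * (t\<^sup>2 * (1 - \<xi>\<^sup>2) + p\<^sup>2) - (t * (1-\<xi>) + p)\<^sup>2"
proof -
  have eq: "(1+\<xi>)\<^sup>2 * (t\<^sup>2 * (1 - \<xi>\<^sup>2) + p\<^sup>2) - (t * (1-\<xi>) + p)\<^sup>2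
     = \<xi>*(2+\<xi>)*p\<^sup>2 + (1-\<xi>) * (\<xi>*(4+3*\<xi>+\<xi>\<^sup>2)*t\<^sup>2 - 2*t*p)"
    by (simp add: power2_eq_square algebra_simps)
  have "t * p \<le> t * (t * \<xi>)" using assms by (simp add: mult_left_mono)
  then have 1: "2*t*p \<le> 2*(t\<^sup>2*\<xi>)" by (simp add: power2_eq_square mult.assoc)
  have "2*(t\<^sup>2*\<xi>) \<le> (4+3*\<xi>+\<xi>\<^sup>2)*(t\<^sup>2*\<xi>)"
    by (rule mult_right_mono) (use assms in auto)
  then have "2*t*p \<le> \<xi>*(4+3*\<xi>+\<xi>\<^sup>2)*t\<^sup>2" using 1 by (simp add: algebra_simps)
  then have "0 \<le> (1-\<xi>) * (\<xi>*(4+3*\<xi>+\<xi>\<^sup>2)*t\<^sup>2 - 2*t*p)" using assms by simp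
  moreover have "0 \<le> \<xi>*(2+\<xi>)*p\<^sup>2" using assms by simp
  ultimately show ?thesis using eq by linarith
qed

lemma core:
  fixes t f \<sigma> e \<alpha> \<beta> s x' :: real
  assumes t0: "0 < t" and f0: "0 < f" and \<sigma>0: "0 \<le> \<sigma>" and e0: "0 \<le> e"
    and \<xi>1: "\<sigma> * e < 1" and tf: "t \<le> f * \<sigma>"
    and ab: "\<alpha>\<^sup>2 + \<beta>\<^sup>2 \<le> t\<^sup>2 * e\<^sup>2" and a0: "0 \<le> \<alpha>" and b0: "0 \<le> \<beta>"
    and x0: "0 \<le> x'" and xle: "x' \<le> t + \<alpha> * s" and s0: "0 \<le> s"
    and sle: "s \<le> \<sigma> / (1 - \<sigma> * e)"
  shows "x'\<^sup>2 * f\<^sup>2 \<le> t\<^sup>2 * ((1 + \<sigma> * e) / (1 - \<sigma> * e))\<^sup>2 * (f\<^sup>2 - \<beta>\<^sup>2)"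
proof -
  define \<xi> where "\<xi> = \<sigma> * e"
  have \<xi>0: "0 \<le> \<xi>" using \<sigma>0 e0 by (simp add: \<xi>_def)
  have \<xi>1': "\<xi> < 1" using \<xi>1 by (simp add: \<xi>_def)
  have \<sigma>pos: "0 < \<sigma>" proof (rule ccontr)
    assume "\<not> 0 < \<sigma>" then have "\<sigma> = 0" using \<sigma>0 by simp
    then show False using tf t0 by simp
  qed
  have "\<alpha>\<^sup>2 \<le> t\<^sup>2 * e\<^sup>2" using ab zero_le_power2[of \<beta>] by linarith
  then have "\<alpha>\<^sup>2 \<le> (t * e)\<^sup>2" by (simp add: power_mult_distrib)
  then have ate: "\<alpha> \<le> t * e" by (rule power2_le_imp_le) (use t0 e0 in simp)
  define p where "p = \<alpha> * \<sigma>"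
  have p0: "0 \<le> p" using a0 \<sigma>0 by (simp add: p_def)
  have ptx: "p \<le> t * \<xi>" using mult_right_mono[OF ate \<sigma>0] by (simp add: p_def \<xi>_def algebra_simps)
  have "\<alpha> * s \<le> \<alpha> * (\<sigma> / (1 - \<xi>))" using mult_left_mono[OF sle a0] by (simp add: \<xi>_def)
  then have "x' \<le> t + p / (1 - \<xi>)" using xle by (simp add: p_def)
  then have xle2: "x' \<le> (t * (1 - \<xi>) + p) / (1 - \<xi>)" using \<xi>1' by (simp add: field_simps)
  have bs: "\<beta>\<^sup>2 * \<sigma>\<^sup>2 \<le> t\<^sup>2 * \<xi>\<^sup>2 - p\<^sup>2"
  proof -
    have "(\<alpha>\<^sup>2 + \<beta>\<^sup>2) * \<sigma>\<^sup>2 \<le> (t\<^sup>2 * e\<^sup>2) * \<sigma>\<^sup>2" using mult_right_mono[OF ab zero_le_power2[of \<sigma>]] .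
    then show ?thesis by (simp add: p_def \<xi>_def power_mult_distrib algebra_simps)
  qed
  define S where "S = f\<^sup>2 * \<sigma>\<^sup>2"
  have S: "t\<^sup>2 \<le> S" unfolding S_def using tf t0 by (metis power_mono power_mult_distrib less_imp_le)
  define A where "A = t * (1 - \<xi>) + p"
  have A0: "0 \<le> A" using \<xi>1' t0 p0 by (simp add: A_def)
  have tx0: "0 \<le> t * \<xi>" using t0 \<xi>0 by simp
  have At: "A \<le> t * (1 + \<xi>)" using ptx tx0 unfolding A_def by (simp add: algebra_simps)
  define D where "D = t\<^sup>2 * (1 + \<xi>)\<^sup>2 - A\<^sup>2"
  have D0: "0 \<le> D" unfolding D_def using A0 At by (simp add: power_mono flip: power_mult_distrib)
  have h: "0 \<le> D + (1+\<xi>)\<^sup>2 * (p\<^sup>2 - t\<^sup>2*\<xi>\<^sup>2)"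
    using core_h[OF \<xi>0 \<xi>1' p0 ptx less_imp_le[OF t0]]
    by (simp add: D_def A_def power2_eq_square algebra_simps)
  have "A\<^sup>2 * S = t\<^sup>2 * (1 + \<xi>)\<^sup>2 * S - D * S" by (simp add: D_def algebra_simps)
  also have "\<dots> \<le> t\<^sup>2 * (1 + \<xi>)\<^sup>2 * S - D * t\<^sup>2" using D0 S by (simp add: mult_left_mono)
  also have "\<dots> \<le> t\<^sup>2 * (1 + \<xi>)\<^sup>2 * (S - t\<^sup>2 * \<xi>\<^sup>2 + p\<^sup>2)"
    using h t0 mult_left_mono[OF h, of "t\<^sup>2"] by (simp add: algebra_simps)
  also have "\<dots> \<le> t\<^sup>2 * (1 + \<xi>)\<^sup>2 * (S - \<beta>\<^sup>2 * \<sigma>\<^sup>2)"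
    using bs by (intro mult_left_mono) auto
  finally have "A\<^sup>2 * f\<^sup>2 * \<sigma>\<^sup>2 \<le> t\<^sup>2 * (1 + \<xi>)\<^sup>2 * (f\<^sup>2 - \<beta>\<^sup>2) * \<sigma>\<^sup>2"
    by (simp add: S_def algebra_simps)
  then have main: "A\<^sup>2 * f\<^sup>2 \<le> t\<^sup>2 * (1 + \<xi>)\<^sup>2 * (f\<^sup>2 - \<beta>\<^sup>2)" using \<sigma>pos by simp
  have "x'\<^sup>2 \<le> (A / (1 - \<xi>))\<^sup>2" using xle2 x0 by (simp add: A_def power_mono)
  then have "x'\<^sup>2 * f\<^sup>2 \<le> (A / (1 - \<xi>))\<^sup>2 * f\<^sup>2" by (simp add: mult_right_mono)
  also have "\<dots> = A\<^sup>2 * f\<^sup>2 / (1 - \<xi>)\<^sup>2" by (simp add: power_divide)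
  also have "\<dots> \<le> t\<^sup>2 * (1 + \<xi>)\<^sup>2 * (f\<^sup>2 - \<beta>\<^sup>2) / (1 - \<xi>)\<^sup>2"
    using main by (simp add: divide_right_mono)
  also have "\<dots> = t\<^sup>2 * ((1 + \<xi>) / (1 - \<xi>))\<^sup>2 * (f\<^sup>2 - \<beta>\<^sup>2)" by (simp add: power_divide)
  finally show ?thesis by (simp add: \<xi>_def)
qed



lemma F_factor:
  fixes lab :: "'n::finite \<Rightarrow> 'k::finite" and g :: "'r::finite \<Rightarrow> 'n" and W :: "real^'n^'r"
  assumes W_colsum: "\<forall>j. (\<Sum>i\<in>UNIV. W $ i $ j) = 1"
    and W_support: "\<forall>i j. lab (g i) \<noteq> lab j \<longrightarrow> W $ i $ j = 0"
  shows "indicator_mat lab = ((\<chi> k i. if lab (g i) = k then 1 else 0) :: real^'r^'k) ** W"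
proof -
  have "(\<Sum>i\<in>UNIV. (if lab (g i) = k then 1 else 0) * W $ i $ j) = (if lab j = k then 1 else 0)" for k j
  proof (cases "lab j = k")
    case True
    have "(\<Sum>i\<in>UNIV. (if lab (g i) = k then 1 else 0) * W $ i $ j) = (\<Sum>i\<in>UNIV. W $ i $ j)"
      by (rule sum.cong) (use True W_support in auto)
    then show ?thesis using True W_colsum by simp
  next
    case False
    have "(\<Sum>i\<in>UNIV. (if lab (g i) = k then 1 else 0) * W $ i $ j) = 0"
      by (rule sum.neutral) (use False W_support in auto)
    then show ?thesis using False by simp
  qed
  then show ?thesis
    by (simp add: indicator_mat_def vec_eq_iff matrix_matrix_mult_def)
qed

lemma rho_ge1:
  fixes c :: "'k::finite \<Rightarrow> nat"
  assumes "\<forall>k. 1 \<le> c k"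
  shows "1 \<le> sqrt (real (Max (range c)) / real (Min (range c)))"
proof -
  have fin: "finite (range c)" and ne: "range c \<noteq> {}" by auto
  have mi: "Min (range c) \<in> range c" using Min_in[OF fin ne] .
  then have m1: "1 \<le> Min (range c)" using assms by auto
  have "Min (range c) \<le> Max (range c)" using Max_ge[OF fin mi] .
  then have "real (Min (range c)) \<le> real (Max (range c))" by simp
  moreover have "0 < real (Min (range c))" by (rule of_nat_0_less_iff[THEN iffD2]) (use m1 in linarith)
  ultimately have "1 \<le> real (Max (range c)) / real (Min (range c))" by simp
  then show ?thesis by simp
qed


theorem theorem5:
  fixes lab :: "'n::finite \<Rightarrow> 'k::finite"
    and g :: "'r::finite \<Rightarrow> 'n"
    and W dW :: "real^'n^'r"
  assumes g_inj: "inj g"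
    and r_pos: "\<forall>k. card {i. lab (g i) = k} \<ge> 1"
    and W_nonneg: "\<forall>i j. W $ i $ j \<ge> 0"
    and W_colsum: "\<forall>j. (\<Sum>i\<in>UNIV. W $ i $ j) = 1"
    and W_rank: "rank W = CARD('r)"
    and W_support: "\<forall>i j. lab (g i) \<noteq> lab j \<longrightarrow> W $ i $ j = 0"
    and xi_small: "spec_norm (pinv W) * spec_norm dW
                    < 1 / sqrt (real (Max (range (\<lambda>k. card {j. lab j = k})))
                              / real (Min (range (\<lambda>k. card {j. lab j = k}))))"
  shows
    "let F = indicator_mat lab;
         W' = W + dW;
         \<xi> = spec_norm (pinv W) * spec_norm dW;
         \<delta> = frob dW / frob W;
         n\<rho> = sqrt (real (Max (range (\<lambda>k. card {j. lab j = k})))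
                    / real (Min (range (\<lambda>k. card {j. lab j = k}))));
         r\<rho> = sqrt (real (Max (range (\<lambda>k. card {i. lab (g i) = k})))
                    / real (Min (range (\<lambda>k. card {i. lab (g i) = k}))));
         X = F ** pinv W;
         X' = F ** pinv W';
         \<gamma> = (frob X)\<^sup>2 * (frob W)\<^sup>2 / (frob (X ** W))\<^sup>2;
         \<epsilon>' = (frob (F - X' ** W'))\<^sup>2 / (frob (X' ** W'))\<^sup>2 + 1;
         \<gamma>' = (frob X')\<^sup>2 * (frob W')\<^sup>2 / (frob (X' ** W'))\<^sup>2
     in \<epsilon>' \<le> n\<rho>\<^sup>2 * \<xi>\<^sup>2 / (1 - n\<rho> * \<xi>)\<^sup>2 + 1
        \<and> \<gamma>' \<le> \<gamma> * (1 + \<delta>)\<^sup>2 * ((1 + r\<rho> * \<xi>) / (1 - n\<rho> * \<xi>))\<^sup>2"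
proof -
  define F where "F = indicator_mat lab"
  define W' where "W' = W + dW"
  define \<sigma> where "\<sigma> = spec_norm (pinv W)"
  define e where "e = spec_norm dW"
  define \<xi> where "\<xi> = \<sigma> * e"
  define \<delta> where "\<delta> = frob dW / frob W"
  define n\<rho> where "n\<rho> = sqrt (real (Max (range (\<lambda>k. card {j. lab j = k})))
                    / real (Min (range (\<lambda>k. card {j. lab j = k}))))"
  define r\<rho> where "r\<rho> = sqrt (real (Max (range (\<lambda>k. card {i. lab (g i) = k})))
                    / real (Min (range (\<lambda>k. card {i. lab (g i) = k}))))"
  define X where "X = F ** pinv W"
  define X' where "X' = F ** pinv W'"
  define FG :: "real^'r^'k" where "FG = (\<chi> k i. if lab (g i) = k then 1 else 0)"
  have FFG: "F = FG ** W" unfolding F_def FG_def using F_factor[OF W_colsum W_support] .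
  have sW: "surj ((*v) W)" using W_rank full_rank_surjective by blast
  have \<sigma>0: "0 \<le> \<sigma>" and e0: "0 \<le> e" by (simp_all add: \<sigma>_def e_def spec_nonneg)
  have \<xi>0: "0 \<le> \<xi>" using \<sigma>0 e0 by (simp add: \<xi>_def)
  have nk1: "\<forall>k. 1 \<le> card {j. lab j = k}"
  proof
    fix k
    obtain i where "lab (g i) = k" using r_pos[rule_format, of k]
      by (metis (mono_tags, lifting) Collect_empty_eq card.empty not_one_le_zero)
    then have "g i \<in> {j. lab j = k}" by simp
    then have "{j. lab j = k} \<noteq> {}" by blast
    then show "1 \<le> card {j. lab j = k}" by (simp add: card_gt_0_iff Suc_le_eq)
  qed
  have n\<rho>1: "1 \<le> n\<rho>" unfolding n\<rho>_def using rho_ge1[OF nk1] .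
  have r\<rho>1: "1 \<le> r\<rho>" unfolding r\<rho>_def using rho_ge1[of "\<lambda>k. card {i. lab (g i) = k}"] r_pos by blast
  have n\<xi>: "n\<rho> * \<xi> < 1"
    using xi_small n\<rho>1 by (simp add: n\<rho>_def[symmetric] \<xi>_def \<sigma>_def e_def field_simps)
  have \<xi>1: "\<xi> < 1" using n\<xi> n\<rho>1 \<xi>0 by (smt (verit) mult_le_cancel_right1)
  have sW': "surj ((*v) W')" using perturb(1)[OF sW] \<xi>1 by (simp add: W'_def \<xi>_def \<sigma>_def e_def)
  have s'le: "spec_norm (pinv W') \<le> \<sigma> / (1 - \<xi>)"
    using perturb(2)[OF sW] \<xi>1 by (simp add: W'_def \<xi>_def \<sigma>_def e_def)
  have XW: "X ** W = F"
  proof -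
    have "X ** W = FG ** (W ** pinv W ** W)" by (simp add: X_def FFG matrix_mul_assoc)
    also have "\<dots> = F" using pinv_props(4)[OF sW] FFG by simp
    finally show ?thesis .
  qed
  define P where "P = pinv W' ** W'"
  have Pt: "transpose P = P" using pinv_props(3)[OF sW'] by (simp add: P_def)
  have PP: "P ** P = P" using pinv_props(2)[OF sW'] by (simp add: P_def matrix_mul_assoc)
  have W'P: "W' ** P = W'" using pinv_props(4)[OF sW'] by (simp add: P_def matrix_mul_assoc)
  have PpW: "P ** pinv W' = pinv W'" using pinv_props(2)[OF sW'] by (simp add: P_def)
  have X'W': "X' ** W' = F ** P" by (simp add: X'_def P_def matrix_mul_assoc)
  have WIP: "W ** (mat 1 - P) = - (dW ** (mat 1 - P))"
  proof -
    have "W = W' - dW" by (simp add: W'_def)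
    then have "W ** (mat 1 - P) = W' ** (mat 1 - P) - dW ** (mat 1 - P)" by (simp add: mm_diff_right)
    also have "W' ** (mat 1 - P) = 0" by (simp add: mm_diff_left W'P)
    finally show ?thesis by simp
  qed
  have FIP: "F ** (mat 1 - P) = - (X ** dW ** (mat 1 - P))"
  proof -
    have "F ** (mat 1 - P) = X ** (W ** (mat 1 - P))" by (simp add: XW[symmetric] matrix_mul_assoc)
    also have "\<dots> = - (X ** (dW ** (mat 1 - P)))" using WIP
      by (simp add: mm_diff_left mm_diff_right)
    finally show ?thesis by (simp add: matrix_mul_assoc)
  qed
  have FmX: "F - X' ** W' = F ** (mat 1 - P)" by (simp add: X'W' mm_diff_left)
  define f where "f = norm F"
  define t where "t = norm X"
  define \<alpha> where "\<alpha> = norm (X ** dW ** P)"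
  define \<beta> where "\<beta> = norm (X ** dW ** (mat 1 - P))"
  have pyth1: "f\<^sup>2 = (norm (X' ** W'))\<^sup>2 + \<beta>\<^sup>2"
    using proj_pyth[OF Pt PP, of F] by (simp add: f_def \<beta>_def FIP X'W')
  have pyth2: "(norm (X ** dW))\<^sup>2 = \<alpha>\<^sup>2 + \<beta>\<^sup>2"
    using proj_pyth[OF Pt PP, of "X ** dW"] by (simp add: \<alpha>_def \<beta>_def)
  have XdW: "norm (X ** dW) \<le> t * e" using frob_mul[of X dW] by (simp add: t_def e_def)
  have tf: "t \<le> f * \<sigma>" using frob_mul[of F "pinv W"] by (simp add: t_def f_def X_def \<sigma>_def)
  have X'eq: "X' = X - X ** dW ** P ** pinv W'"
  proof -
    have "X' = X ** W ** pinv W'" by (simp add: X'_def XW)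
    also have "\<dots> = X ** (W' - dW) ** pinv W'" by (simp add: W'_def)
    also have "\<dots> = X ** (W' ** pinv W') - X ** dW ** pinv W'"
      by (simp add: mm_diff_left mm_diff_right matrix_mul_assoc)
    also have "\<dots> = X - X ** dW ** (P ** pinv W')" by (simp add: pinv_props(1)[OF sW'] PpW)
    finally show ?thesis by (simp add: matrix_mul_assoc)
  qed
  have X'le: "norm X' \<le> t + \<alpha> * spec_norm (pinv W')"
  proof -
    have "norm X' \<le> norm X + norm (X ** dW ** P ** pinv W')"
      unfolding X'eq by (rule norm_triangle_ineq4)
    also have "norm (X ** dW ** P ** pinv W') \<le> \<alpha> * spec_norm (pinv W')"
      unfolding \<alpha>_def by (rule frob_mul)
    finally show ?thesis by (simp add: t_def)
  qed
  have Fne: "F \<noteq> 0"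
  proof
    assume "F = 0"
    obtain j :: 'n where True by blast
    have "F $ lab j $ j = 1" by (simp add: F_def indicator_mat_def)
    then show False using \<open>F = 0\<close> by simp
  qed
  then have f0: "0 < f" by (simp add: f_def)
  have t0: "0 < t" using XW Fne by (auto simp: t_def)
  have Wne: "W \<noteq> 0"
  proof
    assume "W = 0"
    obtain j :: 'n where True by blast
    show False using W_colsum[rule_format, of j] \<open>W = 0\<close> by simp
  qed
  then have w0: "0 < norm W" by simp
  have ab: "\<alpha>\<^sup>2 + \<beta>\<^sup>2 \<le> t\<^sup>2 * e\<^sup>2"
    using pyth2 power_mono[OF XdW norm_ge_zero, of 2] by (simp add: power_mult_distrib)
  have \<beta>0: "0 \<le> \<beta>" and \<alpha>0: "0 \<le> \<alpha>" by (simp_all add: \<alpha>_def \<beta>_def)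
  have \<beta>le: "\<beta> \<le> f * \<xi>"
  proof -
    have "\<beta>\<^sup>2 \<le> t\<^sup>2 * e\<^sup>2" using ab zero_le_power2[of \<alpha>] by linarith
    then have "\<beta>\<^sup>2 \<le> (t * e)\<^sup>2" by (simp add: power_mult_distrib)
    then have "\<beta> \<le> t * e" by (rule power2_le_imp_le) (use t0 e0 in simp)
    also have "\<dots> \<le> f * \<sigma> * e" using tf e0 by (rule mult_right_mono)
    finally show ?thesis by (simp add: \<xi>_def mult.assoc)
  qed
  have core_res: "(norm X')\<^sup>2 * f\<^sup>2 \<le> t\<^sup>2 * ((1 + \<xi>) / (1 - \<xi>))\<^sup>2 * (f\<^sup>2 - \<beta>\<^sup>2)"
    using core[OF t0 f0 \<sigma>0 e0 _ tf ab \<alpha>0 \<beta>0 norm_ge_zero X'le spec_nonneg] \<xi>1 s'le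
    by (simp add: \<xi>_def)
  have den: "(norm (X' ** W'))\<^sup>2 = f\<^sup>2 - \<beta>\<^sup>2" using pyth1 by simp
  have eps: "(frob (F - X' ** W'))\<^sup>2 / (frob (X' ** W'))\<^sup>2 + 1 \<le> n\<rho>\<^sup>2 * \<xi>\<^sup>2 / (1 - n\<rho> * \<xi>)\<^sup>2 + 1"
    using eps_scalar[OF \<beta>0 \<beta>le f0 \<xi>0 n\<rho>1 n\<xi>]
    by (simp add: frob_eq_norm FmX FIP den flip: \<beta>_def)
  have gam: "(frob X')\<^sup>2 * (frob W')\<^sup>2 / (frob (X' ** W'))\<^sup>2
      \<le> (frob X)\<^sup>2 * (frob W)\<^sup>2 / (frob (X ** W))\<^sup>2 * (1 + \<delta>)\<^sup>2 * ((1 + r\<rho> * \<xi>) / (1 - n\<rho> * \<xi>))\<^sup>2"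
  proof -
    define R where "R = (1 + \<xi>) / (1 - \<xi>)"
    define K where "K = (1 + r\<rho> * \<xi>) / (1 - n\<rho> * \<xi>)"
    define x' where "x' = norm X'"
    define w where "w = norm W"
    define w' where "w' = norm W'"
    have R0: "0 \<le> R" using \<xi>0 \<xi>1 by (simp add: R_def)
    have RK: "R \<le> K" unfolding R_def K_def by (rule ratio_mono[OF \<xi>0 n\<rho>1 r\<rho>1 n\<xi>])
    have RK2: "R\<^sup>2 \<le> K\<^sup>2" using RK R0 by (rule power_mono)
    have fb: "0 < f\<^sup>2 - \<beta>\<^sup>2"
    proof -
      have "\<beta> < f" using \<beta>le \<xi>1 f0 by (smt (verit) mult_less_cancel_left2)
      then have "\<beta>\<^sup>2 < f\<^sup>2" using \<beta>0 by (simp add: power_strict_mono)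
      then show ?thesis by simp
    qed
    have d1: "x'\<^sup>2 / (f\<^sup>2 - \<beta>\<^sup>2) \<le> t\<^sup>2 * R\<^sup>2 / f\<^sup>2"
      using core_res fb f0 by (simp add: divide_le_eq le_divide_eq x'_def R_def algebra_simps)
    have ww: "w' \<le> w * (1 + \<delta>)"
    proof -
      have "w' \<le> w + norm dW" unfolding w'_def w_def W'_def by (rule norm_triangle_ineq)
      also have "\<dots> = w * (1 + \<delta>)" using w0 by (simp add: \<delta>_def frob_eq_norm w_def field_simps)
      finally show ?thesis .
    qed
    have ww2: "w'\<^sup>2 \<le> w\<^sup>2 * (1 + \<delta>)\<^sup>2"
      using power_mono[OF ww, of 2] by (simp add: w'_def power_mult_distrib)
    have "x'\<^sup>2 * w'\<^sup>2 / (f\<^sup>2 - \<beta>\<^sup>2) = (x'\<^sup>2 / (f\<^sup>2 - \<beta>\<^sup>2)) * w'\<^sup>2" by simp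
    also have "\<dots> \<le> (t\<^sup>2 * R\<^sup>2 / f\<^sup>2) * (w\<^sup>2 * (1 + \<delta>)\<^sup>2)"
      by (rule mult_mono[OF d1 ww2]) (use f0 in simp_all)
    also have "\<dots> \<le> (t\<^sup>2 * K\<^sup>2 / f\<^sup>2) * (w\<^sup>2 * (1 + \<delta>)\<^sup>2)"
      by (rule mult_right_mono) (use RK2 f0 in \<open>simp_all add: divide_right_mono mult_left_mono\<close>)
    also have "\<dots> = t\<^sup>2 * w\<^sup>2 / f\<^sup>2 * (1 + \<delta>)\<^sup>2 * K\<^sup>2" by simp
    finally have "x'\<^sup>2 * w'\<^sup>2 / (f\<^sup>2 - \<beta>\<^sup>2) \<le> t\<^sup>2 * w\<^sup>2 / f\<^sup>2 * (1 + \<delta>)\<^sup>2 * K\<^sup>2" .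
    then show ?thesis
      by (simp add: frob_eq_norm den XW x'_def w_def w'_def t_def f_def K_def)
  qed
  show ?thesis
    using eps gam
    unfolding Let_def F_def W'_def \<xi>_def \<sigma>_def e_def \<delta>_def n\<rho>_def r\<rho>_def X_def X'_def
    by simp
qed

end
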